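(* Let $\kappa$ be a field, $r\ge1$, $\mathbf{s}=(s_1,\dots,s_d)$ nonnegative integers with sum $r$, $w\in S_{r,\mathbf{s}}$ and $u\in U_w$. Let $H_{\mathbf{s}}:=P_{\mathbf{s}}\times T$ act on $\mathrm{GL}_r(\kappa)$ by $(p,t)\cdot g=pgt^{-1}$. Then the stabilizer of $wu$ in $H_{\mathbf{s}}$ is isomorphic to $$C_T(u)=\{t\in T: tut^{-1}=u\}=\bigcap_{\{\alpha\in R^+\,:\,w\cdot\alpha\in R^-\smallsetminus R_{\mathbf{s}},\ u_\alpha\neq1\}}\mathrm{Ker}\,\alpha.$$
   Context: $T\cong(\kappa^\times)^r$ is the diagonal torus of $\mathrm{GL}_r$. Partition $\{1,\dots,r\}$ into consecutive blocks of sizes $s_d,\dots,s_1$ from $1$ upward; $P_{\mathbf{s}}$ is the block lower triangular subgroup, $L_{\mathbf{s}}$ its block diagonal Levi factor. Permutations $w$ are identified with matrices $a(w)_{ij}=\delta_{i,w(j)}$; $S_{r,\mathbf{s}}$ is the set of $w$ with $w^{-1}(a)<w^{-1}(b)$ whenever $a<b$ are in the same block. Roots: $\alpha_{i,j}(t_1,\dots,t_r)=t_i/t_j$ for $i\ne j$; $R$ is the set of these, $R^+=\{\alpha_{i,j}:j<i\}$, $R^-=R\smallsetminus R^+$, $w\cdot\alpha_{i,j}=\alpha_{w(i),w(j)}$; $U_{\alpha_{i,j}}=\{I+xE_{i,j}:x\in\kappa\}$; $R_{\mathbf{s}}$ is the set of roots $\alpha$ with $U_\alpha\subset L_{\mathbf{s}}$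 (i.e. $\alpha_{i,j}$ with $i,j$ in the same block). $U_w$ is the group of lower unitriangular matrices whose off-diagonal entry $(i,j)$ vanishes unless $j<i$ and $w(i)<w(j)$. For $u\in U_w$ and $\alpha=\alpha_{i,j}$ with $U_\alpha\subset U_w$, $u_\alpha:=I+u_{ij}E_{i,j}$ is the component of $u$ in $U_\alpha$; so $u_\alpha\ne1$ means $u_{ij}\neq0$. *)

theory Defs
  imports "Jordan_Normal_Form.Matrix" "HOL-Combinatorics.Permutations" "HOL-Algebra.Group"
begin

text \<open>Indices are 0-based: position i (0..r-1) corresponds to i+1 in the paper.
 s = [s_1,...,s_d]; the blocks, from index 0 upward, have sizes s_d, ..., s_1.
 blk s i is the number of the block containing position i (counted from 0 upward).\<close>

definition psum :: "nat list \<Rightarrow> nat \<Rightarrow> nat" where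
  "psum s k = sum_list (take k (rev s))"

definition blk :: "nat list \<Rightarrow> nat \<Rightarrow> nat" where
  "blk s i = card {k \<in> {1..length s}. psum s k \<le> i}"

definition Pgrp :: "nat \<Rightarrow> nat list \<Rightarrow> 'a::field mat set" where
  "Pgrp r s = {p \<in> carrier_mat r r. invertible_mat p \<and>
      (\<forall>i<r. \<forall>j<r. blk s i < blk s j \<longrightarrow> p $$ (i,j) = 0)}"

definition Tor :: "nat \<Rightarrow> 'a::field mat set" where
  "Tor r = {t \<in> carrier_mat r r. diagonal_mat t \<and> (\<forall>i<r. t $$ (i,i) \<noteq> 0)}"

definition diag_inv :: "nat \<Rightarrow> 'a::field mat \<Rightarrow> 'a mat" where
  "diag_inv r t = mat r r (\<lambda>(i,j). if i = j then inverse (t $$ (i,i)) else 0)"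

definition perm_mat :: "nat \<Rightarrow> (nat \<Rightarrow> nat) \<Rightarrow> 'a::field mat" where
  "perm_mat r w = mat r r (\<lambda>(i,j). if i = w j then 1 else 0)"

definition S_rs :: "nat \<Rightarrow> nat list \<Rightarrow> (nat \<Rightarrow> nat) set" where
  "S_rs r s = {w. w permutes {..<r} \<and>
      (\<forall>a<r. \<forall>b<r. a < b \<and> blk s a = blk s b \<longrightarrow> Hilbert_Choice.inv w a < Hilbert_Choice.inv w b)}"

definition U_w :: "nat \<Rightarrow> (nat \<Rightarrow> nat) \<Rightarrow> 'a::field mat set" where
  "U_w r w = {u \<in> carrier_mat r r. (\<forall>i<r. u $$ (i,i) = 1) \<and>
      (\<forall>i<r. \<forall>j<r. i \<noteq> j \<longrightarrow> \<not> (j < i \<and> w i < w j) \<longrightarrow> u $$ (i,j) = 0)}"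

definition root_val :: "nat \<Rightarrow> nat \<Rightarrow> 'a::field mat \<Rightarrow> 'a" where
  "root_val i j t = t $$ (i,i) / t $$ (j,j)"

definition stab_group :: "nat \<Rightarrow> nat list \<Rightarrow> 'a::field mat \<Rightarrow> ('a mat \<times> 'a mat) monoid" where
  "stab_group r s g = \<lparr> carrier = {(p,t). p \<in> Pgrp r s \<and> t \<in> Tor r \<and> p * g * diag_inv r t = g},
      mult = (\<lambda>(p,t) (p',t'). (p * p', t * t')), one = (1\<^sub>m r, 1\<^sub>m r) \<rparr>"

definition CT_set :: "nat \<Rightarrow> 'a::field mat \<Rightarrow> 'a mat set" where
  "CT_set r u = {t \<in> Tor r. t * u * diag_inv r t = u}"

definition CT_group :: "nat \<Rightarrow> 'a::field mat \<Rightarrow> 'a mat monoid" where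
  "CT_group r u = \<lparr> carrier = CT_set r u, mult = (*), one = 1\<^sub>m r \<rparr>"

end

theory Submission
  imports Defs
begin

lemma diag_left:
  fixes D M :: "'a::field mat"
  assumes D: "D \<in> carrier_mat r r" "diagonal_mat D" and M: "M \<in> carrier_mat r n"
    and i: "i < r" and j: "j < n"
  shows "(D * M) $$ (i,j) = D $$ (i,i) * M $$ (i,j)"
proof -
  have "(D * M) $$ (i,j) = (\<Sum>k\<in>{0..<r}. D $$ (i,k) * M $$ (k,j))"
    using D M i j by (simp add: scalar_prod_def)
  also have "\<dots> = (\<Sum>k\<in>{0..<r}. if k = i then D $$ (i,i) * M $$ (i,j) else 0)"
    using D i by (intro sum.cong) (auto simp: diagonal_mat_def)
  also have "\<dots> = D $$ (i,i) * M $$ (i,j)" using i by simp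
  finally show ?thesis .
qed

lemma diag_right:
  fixes D M :: "'a::field mat"
  assumes D: "D \<in> carrier_mat r r" "diagonal_mat D" and M: "M \<in> carrier_mat n r"
    and i: "i < n" and j: "j < r"
  shows "(M * D) $$ (i,j) = M $$ (i,j) * D $$ (j,j)"
proof -
  have "(M * D) $$ (i,j) = (\<Sum>k\<in>{0..<r}. M $$ (i,k) * D $$ (k,j))"
    using D M i j by (simp add: scalar_prod_def)
  also have "\<dots> = (\<Sum>k\<in>{0..<r}. if k = j then M $$ (i,j) * D $$ (j,j) else 0)"
    using D j by (intro sum.cong) (auto simp: diagonal_mat_def)
  also have "\<dots> = M $$ (i,j) * D $$ (j,j)" using j by simp
  finally show ?thesis .
qed

lemma diag_inv_props:
  shows "diag_inv r t \<in> carrier_mat r r" "diagonal_mat (diag_inv r t)"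
    "i < r \<Longrightarrow> diag_inv r t $$ (i,i) = inverse (t $$ (i,i))"
  by (auto simp: diag_inv_def diagonal_mat_def)

lemma Tor_D: "t \<in> Tor r \<Longrightarrow> t \<in> carrier_mat r r \<and> diagonal_mat t \<and> (\<forall>i<r. t $$ (i,i) \<noteq> 0)"
  by (simp add: Tor_def)

lemma conj_entry:
  fixes t M :: "'a::field mat"
  assumes t: "t \<in> Tor r" and M: "M \<in> carrier_mat r r" and i: "i < r" and j: "j < r"
  shows "(t * M * diag_inv r t) $$ (i,j) = t $$ (i,i) * M $$ (i,j) * inverse (t $$ (j,j))"
proof -
  have tc: "t \<in> carrier_mat r r" "diagonal_mat t" using Tor_D[OF t] by auto
  have "t * M \<in> carrier_mat r r" using tc M by simp
  then have "(t * M * diag_inv r t) $$ (i,j) = (t*M) $$ (i,j) * diag_inv r t $$ (j,j)"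
    using diag_right[OF diag_inv_props(1,2)] i j by blast
  also have "\<dots> = t $$ (i,i) * M $$ (i,j) * inverse (t $$ (j,j))"
    using diag_left[OF tc M i j] diag_inv_props(3)[OF j, where t=t] by simp
  finally show ?thesis .
qed

lemma t_dinv:
  fixes t :: "'a::field mat"
  assumes t: "t \<in> Tor r"
  shows "t * diag_inv r t = 1\<^sub>m r" "diag_inv r t * t = 1\<^sub>m r"
proof -
  have tc: "t \<in> carrier_mat r r" "diagonal_mat t" "\<forall>i<r. t $$ (i,i) \<noteq> 0" using Tor_D[OF t] by auto
  show "t * diag_inv r t = 1\<^sub>m r"
    apply (rule eq_matI)
    using tc diag_left[OF tc(1,2) diag_inv_props(1)] 
    by (auto simp: diag_inv_def)
  show "diag_inv r t * t = 1\<^sub>m r"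
    apply (rule eq_matI)
    using tc diag_right[OF tc(1,2) diag_inv_props(1)] 
    by (auto simp: diag_inv_def)
qed

lemma blk_mono: "a \<le> b \<Longrightarrow> blk s a \<le> blk s b"
  unfolding blk_def by (rule card_mono) auto

lemma perm_right:
  fixes M :: "'a::field mat"
  assumes w: "w permutes {..<r}" and M: "M \<in> carrier_mat n r" and a: "a < n" and k: "k < r"
  shows "(M * perm_mat r w) $$ (a,k) = M $$ (a, w k)"
proof -
  have wk: "w k < r" using permutes_in_image[OF w] k by auto
  have "(M * perm_mat r w) $$ (a,k) = (\<Sum>b\<in>{0..<r}. M $$ (a,b) * (if b = w k then 1 else 0))"
    using M a k by (simp add: scalar_prod_def perm_mat_def)
  also have "\<dots> = M $$ (a, w k)" using wk by (simp add: if_distrib cong: if_cong)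
  finally show ?thesis .
qed

lemma perm_left:
  fixes M :: "'a::field mat"
  assumes w: "w permutes {..<r}" and M: "M \<in> carrier_mat r n" and i: "i < r" and j: "j < n"
  shows "(perm_mat r w * M) $$ (w i,j) = M $$ (i, j)"
proof -
  have wi: "w i < r" using permutes_in_image[OF w] i by auto
  have inj: "\<And>c. w i = w c \<longleftrightarrow> i = c" using w by (metis permutes_inj injD)
  have "(perm_mat r w * M) $$ (w i,j) = (\<Sum>c\<in>{0..<r}. (if w i = w c then 1 else 0) * M $$ (c,j))"
    using M wi j by (simp add: scalar_prod_def perm_mat_def)
  also have "\<dots> = M $$ (i, j)" using i by (simp add: inj if_distrib[of "\<lambda>x. x * _"] cong: if_cong)
  finally show ?thesis .
qed


lemma inv_zero:
  fixes w :: "nat \<Rightarrow> nat" and p :: "'a::field mat"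
  assumes w: "w \<in> S_rs r s" and p: "p \<in> Pgrp r s" and ij: "i < r" "j < r" "j < i" "w i < w j"
  shows "p $$ (w i, w j) = 0" and "blk s (w i) \<noteq> blk s (w j)"
proof -
  have wp: "w permutes {..<r}" using w by (simp add: S_rs_def)
  have wr: "w i < r" "w j < r" using permutes_in_image[OF wp] ij by auto
  show ne: "blk s (w i) \<noteq> blk s (w j)"
  proof
    assume "blk s (w i) = blk s (w j)"
    then have "Hilbert_Choice.inv w (w i) < Hilbert_Choice.inv w (w j)" using w wr ij(4) by (auto simp: S_rs_def)
    then show False using ij permutes_inverses(2)[OF wp] by simp
  qed
  have "blk s (w i) < blk s (w j)" using ne blk_mono[of "w i" "w j" s] ij(4) by simp
  then show "p $$ (w i, w j) = 0" using p wr by (auto simp: Pgrp_def)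
qed

lemma one_Pgrp: "(1\<^sub>m r :: 'a::field mat) \<in> Pgrp r s"
proof -
  have "invertible_mat (1\<^sub>m r :: 'a mat)"
    unfolding invertible_mat_def inverts_mat_def by (auto intro!: exI[of _ "1\<^sub>m r"])
  then show ?thesis unfolding Pgrp_def by auto
qed

lemma key:
  fixes w :: "nat \<Rightarrow> nat" and p t u :: "'a::field mat"
  assumes w: "w \<in> S_rs r s" and u: "u \<in> U_w r w" and p: "p \<in> Pgrp r s" and t: "t \<in> Tor r"
    and eq: "p * (perm_mat r w * u) = perm_mat r w * u * t"
  shows "\<forall>i<r. \<forall>j<r. p $$ (w i, w j) = (if i = j then t $$ (j,j) else 0)"
    and "\<forall>i<r. \<forall>j<r. t $$ (i,i) * u $$ (i,j) = u $$ (i,j) * t $$ (j,j)"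
proof -
  have wp: "w permutes {..<r}" using w by (simp add: S_rs_def)
  have uc: "u \<in> carrier_mat r r" using u by (simp add: U_w_def)
  have pc: "p \<in> carrier_mat r r" using p by (simp add: Pgrp_def)
  have tc: "t \<in> carrier_mat r r" "diagonal_mat t" using Tor_D[OF t] by auto
  have Ac: "perm_mat r w \<in> carrier_mat r r" by (simp add: perm_mat_def)
  have u1: "\<And>i. i < r \<Longrightarrow> u $$ (i,i) = 1" using u by (simp add: U_w_def)
  have u0: "\<And>i j. i < r \<Longrightarrow> j < r \<Longrightarrow> i \<noteq> j \<Longrightarrow> \<not> (j < i \<and> w i < w j) \<Longrightarrow> u $$ (i,j) = 0"
    using u by (simp add: U_w_def)
  have E: "(\<Sum>k\<in>{0..<r}. p $$ (w i, w k) * u $$ (k,j)) = u $$ (i,j) * t $$ (j,j)"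
    if ij: "i < r" "j < r" for i j
  proof -
    have wi: "w i < r" using permutes_in_image[OF wp] ij by auto
    have "(p * (perm_mat r w * u)) $$ (w i, j) = (p * perm_mat r w * u) $$ (w i, j)"
      using assoc_mult_mat[OF pc Ac uc] by simp
    also have "\<dots> = (\<Sum>k\<in>{0..<r}. (p * perm_mat r w) $$ (w i, k) * u $$ (k,j))"
      using pc Ac uc wi ij by (simp add: scalar_prod_def row_def perm_mat_def)
    also have "\<dots> = (\<Sum>k\<in>{0..<r}. p $$ (w i, w k) * u $$ (k,j))"
      using perm_right[OF wp pc wi] by simp
    finally have L: "(p * (perm_mat r w * u)) $$ (w i, j) = (\<Sum>k\<in>{0..<r}. p $$ (w i, w k) * u $$ (k,j))" .
    have "(perm_mat r w * u * t) $$ (w i, j) = (perm_mat r w * u) $$ (w i, j) * t $$ (j,j)"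
      using diag_right[OF tc, of "perm_mat r w * u" r "w i" j] mult_carrier_mat[OF Ac uc] wi ij by simp
    also have "\<dots> = u $$ (i,j) * t $$ (j,j)" using perm_left[OF wp uc ij] by simp
    finally show ?thesis using L eq by simp
  qed
  have IND: "\<forall>i<r. p $$ (w i, w j) = (if i = j then t $$ (j,j) else 0)" if "j < r" for j
    using that
  proof (induction "r - j" arbitrary: j rule: less_induct)
    case less
    show ?case
    proof (intro allI impI)
      fix i assume i: "i < r"
      have "(\<Sum>k\<in>{0..<r}. p $$ (w i, w k) * u $$ (k,j)) =
            (\<Sum>k\<in>{0..<r}. (if k = j then p $$ (w i, w j) else 0) +
                (if k = i \<and> j < i then t $$ (i,i) * u $$ (i,j) else 0))"
      proof (rule sum.cong)
        fix k assume k: "k \<in> {0..<r}"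
        show "p $$ (w i, w k) * u $$ (k,j) = (if k = j then p $$ (w i, w j) else 0) +
                (if k = i \<and> j < i then t $$ (i,i) * u $$ (i,j) else 0)"
        proof (cases "k = j")
          case True then show ?thesis using u1 less.prems by auto
        next
          case False
          show ?thesis
          proof (cases "j < k")
            case True
            have "p $$ (w i, w k) = (if i = k then t $$ (k,k) else 0)"
              using less.hyps[of k] True k i by auto
            then show ?thesis using False True by auto
          next
            case F2: False
            then have "u $$ (k,j) = 0" using u0[of k j] k less.prems False by auto
            then show ?thesis using False F2 by auto
          qed
        qed
      qed simp
      also have "\<dots> = p $$ (w i, w j) + (if j < i then t $$ (i,i) * u $$ (i,j) else 0)"
        using i less.prems by (simp add: sum.distrib)
      finally have EE: "p $$ (w i, w j) + (if j < i then t $$ (i,i) * u $$ (i,j) else 0) = u $$ (i,j) * t $$ (j,j)"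
        using E[OF i less.prems] by simp
      show "p $$ (w i, w j) = (if i = j then t $$ (j,j) else 0)"
      proof (cases "i = j")
        case True then show ?thesis using EE u1 i by simp
      next
        case False
        show ?thesis
        proof (cases "j < i \<and> w i < w j")
          case True
          then show ?thesis using inv_zero(1)[OF w p i less.prems] False by simp
        next
          case F2: False
          then have "u $$ (i,j) = 0" using u0[OF i less.prems False] by simp
          then show ?thesis using EE False by (simp split: if_splits)
        qed
      qed
    qed
  qed
  then show A: "\<forall>i<r. \<forall>j<r. p $$ (w i, w j) = (if i = j then t $$ (j,j) else 0)" by blast
  show "\<forall>i<r. \<forall>j<r. t $$ (i,i) * u $$ (i,j) = u $$ (i,j) * t $$ (j,j)"
  proof (intro allI impI)
    fix i j assume ij: "i < r" "j < r"
    have "(\<Sum>k\<in>{0..<r}. p $$ (w i, w k) * u $$ (k,j)) = (\<Sum>k\<in>{0..<r}. if k = i then t $$ (i,i) * u $$ (i,j) else 0)"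
      using A ij by (intro sum.cong) auto
    then show "t $$ (i,i) * u $$ (i,j) = u $$ (i,j) * t $$ (j,j)" using E[OF ij] ij by (simp add: mult.commute)
  qed
qed


lemma stab_eq:
  fixes p t g :: "'a::field mat"
  assumes t: "t \<in> Tor r" and p: "p \<in> carrier_mat r r" and g: "g \<in> carrier_mat r r"
    and e: "p * g * diag_inv r t = g"
  shows "p * g = g * t"
proof -
  have tc: "t \<in> carrier_mat r r" using Tor_D[OF t] by auto
  have "g * t = p * g * diag_inv r t * t" using e by simp
  also have "\<dots> = p * g * (diag_inv r t * t)"
    using assoc_mult_mat[OF mult_carrier_mat[OF p g] diag_inv_props(1) tc] by simp
  also have "\<dots> = p * g" using t_dinv(2)[OF t] p g by simp
  finally show ?thesis by simp
qed

lemma CT_char: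
  fixes t u :: "'a::field mat"
  assumes t: "t \<in> Tor r" and u: "u \<in> carrier_mat r r"
  shows "t * u * diag_inv r t = u \<longleftrightarrow> (\<forall>i<r. \<forall>j<r. t $$ (i,i) * u $$ (i,j) = u $$ (i,j) * t $$ (j,j))"
proof -
  have nz: "\<forall>i<r. t $$ (i,i) \<noteq> 0" "t \<in> carrier_mat r r" using Tor_D[OF t] by auto
  have c: "t * u * diag_inv r t \<in> carrier_mat r r"
    using mult_carrier_mat[OF mult_carrier_mat[OF nz(2) u] diag_inv_props(1)] .
  have "t * u * diag_inv r t = u \<longleftrightarrow> (\<forall>i<r. \<forall>j<r. (t * u * diag_inv r t) $$ (i,j) = u $$ (i,j))"
  proof
    assume "\<forall>i<r. \<forall>j<r. (t * u * diag_inv r t) $$ (i,j) = u $$ (i,j)"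
    show "t * u * diag_inv r t = u"
    proof (rule eq_matI)
      fix i j assume "i < dim_row u" "j < dim_col u"
      then show "(t * u * diag_inv r t) $$ (i,j) = u $$ (i,j)" using u \<open>\<forall>i<r. \<forall>j<r. _\<close> by auto
    qed (use c u in auto)
  qed simp
  also have "\<dots> \<longleftrightarrow> (\<forall>i<r. \<forall>j<r. t $$ (i,i) * u $$ (i,j) = u $$ (i,j) * t $$ (j,j))"
  proof -
    have "((t * u * diag_inv r t) $$ (i,j) = u $$ (i,j)) \<longleftrightarrow> (t $$ (i,i) * u $$ (i,j) = u $$ (i,j) * t $$ (j,j))"
      if ij: "i < r" "j < r" for i j
    proof -
      have "(t * u * diag_inv r t) $$ (i,j) = t $$ (i,i) * u $$ (i,j) / t $$ (j,j)"
        using conj_entry[OF t u ij] by (simp add: divide_inverse)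
      then show ?thesis using nz(1) ij(2) by (auto simp: field_simps)
    qed
    then show ?thesis by blast
  qed
  finally show ?thesis .
qed

theorem lemma3p4:
  fixes r :: nat and s :: "nat list" and w :: "nat \<Rightarrow> nat" and u :: "'a::field mat"
  assumes "r \<ge> 1" and "sum_list s = r"
    and "w \<in> S_rs r s" and "u \<in> U_w r w"
  shows "stab_group r s (perm_mat r w * u) \<cong> CT_group r u \<and>
     (CT_set r u = {t \<in> Tor r. \<forall>i<r. \<forall>j<r.
           (j < i \<and> w i < w j \<and> blk s (w i) \<noteq> blk s (w j) \<and> u $$ (i,j) \<noteq> 0)
             \<longrightarrow> root_val i j t = 1})"
proof
  note w = assms(3) and u = assms(4)
  have wp: "w permutes {..<r}" using w by (simp add: S_rs_def)
  have uc: "u \<in> carrier_mat r r" using u by (simp add: U_w_def)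
  have Ac: "perm_mat r w \<in> carrier_mat r r" by (simp add: perm_mat_def)
  have gc: "perm_mat r w * u \<in> carrier_mat r r" using mult_carrier_mat[OF Ac uc] .
  have u0: "\<And>i j. i < r \<Longrightarrow> j < r \<Longrightarrow> i \<noteq> j \<Longrightarrow> \<not> (j < i \<and> w i < w j) \<Longrightarrow> u $$ (i,j) = 0"
    using u by (simp add: U_w_def)
  have winv: "\<And>a. a < r \<Longrightarrow> w (Hilbert_Choice.inv w a) = a \<and> Hilbert_Choice.inv w a < r"
    using permutes_inverses(1)[OF wp] permutes_in_image[OF permutes_inv[OF wp]] by auto
  have wr: "\<And>i. i < r \<Longrightarrow> w i < r" using permutes_in_image[OF wp] by auto
  show "CT_set r u = {t \<in> Tor r. \<forall>i<r. \<forall>j<r.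
           (j < i \<and> w i < w j \<and> blk s (w i) \<noteq> blk s (w j) \<and> u $$ (i,j) \<noteq> 0)
             \<longrightarrow> root_val i j t = 1}" (is "_ = ?R")
  proof (intro Set.set_eqI iffI)
    fix t assume "t \<in> CT_set r u"
    then have t: "t \<in> Tor r" and c: "\<forall>i<r. \<forall>j<r. t $$ (i,i) * u $$ (i,j) = u $$ (i,j) * t $$ (j,j)"
      using CT_char[OF _ uc] by (auto simp: CT_set_def)
    have nz: "\<forall>i<r. t $$ (i,i) \<noteq> 0" using Tor_D[OF t] by auto
    show "t \<in> ?R" using t c nz by (auto simp: root_val_def)
  next
    fix t assume tR: "t \<in> ?R"
    then have t: "t \<in> Tor r" by simp
    have nz: "\<forall>i<r. t $$ (i,i) \<noteq> 0" using Tor_D[OF t] by auto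
    have "\<forall>i<r. \<forall>j<r. t $$ (i,i) * u $$ (i,j) = u $$ (i,j) * t $$ (j,j)"
    proof (intro allI impI)
      fix i j assume ij: "i < r" "j < r"
      show "t $$ (i,i) * u $$ (i,j) = u $$ (i,j) * t $$ (j,j)"
      proof (cases "i = j \<or> u $$ (i,j) = 0")
        case True then show ?thesis by auto
      next
        case False
        then have inv: "j < i \<and> w i < w j" using u0[OF ij] by auto
        have "blk s (w i) \<noteq> blk s (w j)"
          using inv_zero(2)[OF w one_Pgrp ij] inv by blast
        then have "root_val i j t = 1" using tR ij inv False by auto
        then show ?thesis using nz ij by (simp add: root_val_def)
      qed
    qed
    then show "t \<in> CT_set r u" using CT_char[OF t uc] t by (simp add: CT_set_def)
  qed
  have carrG: "\<And>p t. (p,t) \<in> carrier (stab_group r s (perm_mat r w * u)) \<Longrightarrow>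
      p \<in> Pgrp r s \<and> t \<in> Tor r \<and> p * (perm_mat r w * u) = perm_mat r w * u * t"
  proof -
    fix p t assume "(p,t) \<in> carrier (stab_group r s (perm_mat r w * u))"
    then have pP: "p \<in> Pgrp r s" and t: "t \<in> Tor r" and e: "p * (perm_mat r w * u) * diag_inv r t = perm_mat r w * u"
      by (auto simp: stab_group_def)
    have pc: "p \<in> carrier_mat r r" using pP by (simp add: Pgrp_def)
    show "p \<in> Pgrp r s \<and> t \<in> Tor r \<and> p * (perm_mat r w * u) = perm_mat r w * u * t"
      using pP t stab_eq[OF t pc gc e] by simp
  qed
  have "snd \<in> iso (stab_group r s (perm_mat r w * u)) (CT_group r u)"
  proof (rule isoI)
    show "snd \<in> hom (stab_group r s (perm_mat r w * u)) (CT_group r u)"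
    proof (rule homI)
      fix x assume "x \<in> carrier (stab_group r s (perm_mat r w * u))"
      then obtain p t where x: "x = (p,t)" and c: "(p,t) \<in> carrier (stab_group r s (perm_mat r w * u))"
        by (cases x) auto
      note cc = carrG[OF c]
      have "\<forall>i<r. \<forall>j<r. t $$ (i,i) * u $$ (i,j) = u $$ (i,j) * t $$ (j,j)"
        using key(2)[OF w u] cc by blast
      then show "snd x \<in> carrier (CT_group r u)"
        using CT_char[OF _ uc] cc x by (simp add: CT_group_def CT_set_def)
    next
      fix x y assume "x \<in> carrier (stab_group r s (perm_mat r w * u))"
        "y \<in> carrier (stab_group r s (perm_mat r w * u))"
      then show "snd (x \<otimes>\<^bsub>stab_group r s (perm_mat r w * u)\<^esub> y) = snd x \<otimes>\<^bsub>CT_group r u\<^esub> snd y"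
        by (cases x, cases y) (simp add: stab_group_def CT_group_def)
    qed
  next
    show "bij_betw snd (carrier (stab_group r s (perm_mat r w * u))) (carrier (CT_group r u))"
    proof (rule bij_betw_imageI)
      show "inj_on snd (carrier (stab_group r s (perm_mat r w * u)))"
      proof (rule inj_onI)
        fix x y assume x: "x \<in> carrier (stab_group r s (perm_mat r w * u))"
          and y: "y \<in> carrier (stab_group r s (perm_mat r w * u))" and e: "snd x = snd y"
        obtain p t where xx: "x = (p,t)" by (cases x)
        obtain p' t' where yy: "y = (p',t')" by (cases y)
        have c1: "p \<in> Pgrp r s \<and> t \<in> Tor r \<and> p * (perm_mat r w * u) = perm_mat r w * u * t"
          using carrG x xx by blast
        have c2: "p' \<in> Pgrp r s \<and> t \<in> Tor r \<and> p' * (perm_mat r w * u) = perm_mat r w * u * t"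
          using carrG y yy e xx by auto
        have E1: "\<forall>i<r. \<forall>j<r. p $$ (w i, w j) = (if i = j then t $$ (j,j) else 0)"
          using key(1)[OF w u] c1 by blast
        have E2: "\<forall>i<r. \<forall>j<r. p' $$ (w i, w j) = (if i = j then t $$ (j,j) else 0)"
          using key(1)[OF w u] c2 by blast
        have "p = p'"
        proof (rule eq_matI)
          show "dim_row p = dim_row p'" "dim_col p = dim_col p'" using c1 c2 by (auto simp: Pgrp_def)
        next
          fix a b assume ab: "a < dim_row p'" "b < dim_col p'"
          then have ab': "a < r" "b < r" using c2 by (auto simp: Pgrp_def)
          show "p $$ (a,b) = p' $$ (a,b)"
            using E1 E2 winv[OF ab'(1)] winv[OF ab'(2)] by metis
        qed
        then show "x = y" using xx yy e by simp
      qed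
    next
      show "snd ` carrier (stab_group r s (perm_mat r w * u)) = carrier (CT_group r u)"
      proof (intro Set.set_eqI iffI)
        fix t assume "t \<in> snd ` carrier (stab_group r s (perm_mat r w * u))"
        then obtain p where c: "(p,t) \<in> carrier (stab_group r s (perm_mat r w * u))" by force
        note cc = carrG[OF c]
        have "\<forall>i<r. \<forall>j<r. t $$ (i,i) * u $$ (i,j) = u $$ (i,j) * t $$ (j,j)"
          using key(2)[OF w u] cc by blast
        then show "t \<in> carrier (CT_group r u)"
          using CT_char[OF _ uc] cc by (simp add: CT_group_def CT_set_def)
      next
        fix t assume "t \<in> carrier (CT_group r u)"
        then have t: "t \<in> Tor r" and tu: "t * u * diag_inv r t = u" by (auto simp: CT_group_def CT_set_def)
        have tc: "t \<in> carrier_mat r r" "diagonal_mat t" "\<forall>i<r. t $$ (i,i) \<noteq> 0" using Tor_D[OF t] by auto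
        define p :: "'a mat" where "p = mat r r (\<lambda>(a,b). if a = b then t $$ (Hilbert_Choice.inv w a, Hilbert_Choice.inv w a) else 0)"
        define q :: "'a mat" where "q = mat r r (\<lambda>(a,b). if a = b then inverse (t $$ (Hilbert_Choice.inv w a, Hilbert_Choice.inv w a)) else 0)"
        have pc: "p \<in> carrier_mat r r" "diagonal_mat p" by (auto simp: p_def diagonal_mat_def)
        have qc: "q \<in> carrier_mat r r" "diagonal_mat q" by (auto simp: q_def diagonal_mat_def)
        have pq: "p * q = 1\<^sub>m r"
          apply (rule eq_matI)
          using diag_left[OF pc qc(1)] tc(3) winv by (auto simp: p_def q_def)
        have qp: "q * p = 1\<^sub>m r"
          apply (rule eq_matI)
          using diag_left[OF qc pc(1)] tc(3) winv by (auto simp: p_def q_def)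
        have inv: "invertible_mat p"
          unfolding invertible_mat_def inverts_mat_def using pc qc pq qp by auto
        have pP: "p \<in> Pgrp r s" using pc inv by (auto simp: Pgrp_def p_def)
        have pA: "p * perm_mat r w = perm_mat r w * t"
        proof (rule eq_matI)
          fix a k assume "a < dim_row (perm_mat r w * t)" "k < dim_col (perm_mat r w * t)"
          then have ak: "a < r" "k < r" using Ac tc by (auto simp: perm_mat_def)
          have "(p * perm_mat r w) $$ (a,k) = p $$ (a, w k)" using perm_right[OF wp pc(1) ak] .
          also have "\<dots> = (perm_mat r w) $$ (a,k) * t $$ (k,k)"
            using ak wr[OF ak(2)] permutes_inverses(2)[OF wp] by (auto simp: p_def perm_mat_def)
          also have "\<dots> = (perm_mat r w * t) $$ (a,k)" using diag_right[OF tc(1,2) Ac ak] by simp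
          finally show "(p * perm_mat r w) $$ (a,k) = (perm_mat r w * t) $$ (a,k)" .
        qed (use pc Ac tc in \<open>auto simp: perm_mat_def\<close>)
        have "p * (perm_mat r w * u) * diag_inv r t = (p * perm_mat r w) * u * diag_inv r t"
          using assoc_mult_mat[OF pc(1) Ac uc] by simp
        also have "\<dots> = perm_mat r w * t * u * diag_inv r t" using pA by simp
        also have "\<dots> = perm_mat r w * (t * u * diag_inv r t)"
          using assoc_mult_mat[OF Ac tc(1) uc] assoc_mult_mat[OF Ac mult_carrier_mat[OF tc(1) uc] diag_inv_props(1)]
          by simp
        also have "\<dots> = perm_mat r w * u" using tu by simp
        finally have "(p,t) \<in> carrier (stab_group r s (perm_mat r w * u))"
          using pP t by (simp add: stab_group_def)
        then show "t \<in> snd ` carrier (stab_group r s (perm_mat r w * u))" by force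
      qed
    qed
  qed
  then show "stab_group r s (perm_mat r w * u) \<cong> CT_group r u" by (rule is_isoI)
qed

end
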